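(* Under the hypotheses of the previous setting — $f\in C^2(0,\infty)$ with $f'>0$, $(u,m)$ a classical solution ($u\in C^3$, $m\in C^2$) of $-u_t+\frac12u_x^2=f(m)$, $m_t-(mu_x)_x=0$ in $\mathbb R\times(0,T)$ with $m>0$ and $u_x$ of at most linear growth, $m_0=m(\cdot,0)$, and $\gamma$ the solution of $\gamma_t(x,t)=-u_x(\gamma(x,t),t)$, $\gamma(x,0)=x$ — the function $v(x,t)=f(m(\gamma(x,t),t))$ satisfies $$-\Big(\frac{v_x}{\gamma_x}\Big)_x-\Big(\frac{\gamma_x^2}{m_0f'(m_0/\gamma_x)}v_t\Big)_t=0\qquad\text{in }\mathbb R\times(0,T).$$ In particular, if $f(m)=m^\theta$ ($\theta>0$), then $-\big(\frac{v_x}{\gamma_x}\big)_x-\big(\frac{\gamma_x}{\theta v}v_t\big)_t=0$, equivalently $-v_{tt}-\frac{\theta v}{\gamma_x^2}v_{xx}+v_x\frac{\theta v}{\gamma_x^3}\gamma_{xx}+\frac{\theta+1}{\theta}v^{-1}v_t^2=0$; and if $f(m)=\log m$, then $-\big(\frac{v_x}{\gamma_x}\big)_x-(\gamma_xv_t)_t=0$. *)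

theory Defs
  imports "HOL-Analysis.Analysis"
begin

definition dx :: "(real \<Rightarrow> real \<Rightarrow> real) \<Rightarrow> real \<Rightarrow> real \<Rightarrow> real" where
  "dx g x t = deriv (\<lambda>y. g y t) x"

definition dt :: "(real \<Rightarrow> real \<Rightarrow> real) \<Rightarrow> real \<Rightarrow> real \<Rightarrow> real" where
  "dt g x t = deriv (\<lambda>s. g x s) t"

text \<open>C^k on a set S of the (x,t)-plane: all partial derivatives up to order k exist
  (relative to S, so one-sided at a boundary such as t = 0) and are continuous on S.\<close>

fun Ck :: "nat \<Rightarrow> (real \<Rightarrow> real \<Rightarrow> real) \<Rightarrow> (real \<times> real) set \<Rightarrow> bool" where
  "Ck 0 g S = continuous_on S (\<lambda>(x, t). g x t)"
| "Ck (Suc k) g S = (continuous_on S (\<lambda>(x, t). g x t) \<and>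
     (\<exists>gx gt. (\<forall>(x, t)\<in>S.
          ((\<lambda>y. g y t) has_real_derivative gx x t) (at x within {y. (y, t) \<in> S}) \<and>
          ((\<lambda>s. g x s) has_real_derivative gt x t) (at t within {s. (x, s) \<in> S}))
        \<and> Ck k gx S \<and> Ck k gt S))"

definition C2_on :: "real set \<Rightarrow> (real \<Rightarrow> real) \<Rightarrow> bool" where
  "C2_on A f \<longleftrightarrow> (\<forall>s\<in>A. f differentiable (at s) \<and> deriv f differentiable (at s))
     \<and> continuous_on A (deriv (deriv f))"

definition vfun :: "(real \<Rightarrow> real) \<Rightarrow> (real \<Rightarrow> real \<Rightarrow> real) \<Rightarrow> (real \<Rightarrow> real \<Rightarrow> real)
    \<Rightarrow> real \<Rightarrow> real \<Rightarrow> real" where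
  "vfun f m \<gamma> x t = f (m (\<gamma> x t) t)"

end

theory Submission
  imports Defs
begin


lemma chain2:
  fixes F :: "real \<Rightarrow> real \<Rightarrow> real"
  assumes F: "((\<lambda>z. F (fst z) (snd z)) has_derivative (\<lambda>h. A * fst h + B * snd h)) (at (a s, b s) within X)"
    and a: "(a has_real_derivative a') (at s within J)" and b: "(b has_real_derivative b') (at s within J)"
    and sub: "\<And>r. r \<in> J \<Longrightarrow> (a r, b r) \<in> X"
  shows "((\<lambda>r. F (a r) (b r)) has_real_derivative (A*a' + B*b')) (at s within J)"
proof -
  have c: "((\<lambda>r. (a r, b r)) has_derivative (\<lambda>h. (a' * h, b' * h))) (at s within J)"
    using has_derivative_Pair[OF a[unfolded has_field_derivative_def] b[unfolded has_field_derivative_def]] by simp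
  have F': "((\<lambda>z. F (fst z) (snd z)) has_derivative (\<lambda>h. A * fst h + B * snd h)) (at ((\<lambda>r. (a r, b r)) s) within (\<lambda>r. (a r, b r)) ` J)"
    by (rule has_derivative_subset[OF F]) (use sub in auto)
  have eq: "(\<lambda>h. A * fst h + B * snd h) \<circ> (\<lambda>h. (a' * h, b' * h)) = (*) (A*a' + B*b')"
    by (auto simp: algebra_simps)
  from diff_chain_within[OF c F'] show ?thesis unfolding has_field_derivative_def eq
    by (simp add: o_def)
qed

lemma joint_deriv:
  fixes g :: "real \<Rightarrow> real \<Rightarrow> real"
  assumes gx: "((\<lambda>x. g x y) has_real_derivative A) (at x within X)"
    and gy: "\<And>x y. x \<in> X \<Longrightarrow> y \<in> Y \<Longrightarrow> ((\<lambda>y. g x y) has_real_derivative gy x y) (at y within Y)"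
    and cont: "continuous_on (X \<times> Y) (\<lambda>(x,y). gy x y)"
    and xy: "x \<in> X" "y \<in> Y" and cvx: "convex Y"
  shows "((\<lambda>z. g (fst z) (snd z)) has_derivative (\<lambda>h. A * fst h + gy x y * snd h)) (at (x,y) within X \<times> Y)"
proof -
  have c1: "continuous (at (x, y) within X \<times> Y) (\<lambda>(x, y). gy x y)"
    using cont xy by (simp add: continuous_on_eq_continuous_within)
  have c2: "continuous (at (x, y) within X \<times> Y) (\<lambda>(x, y). blinfun_mult_right (gy x y))"
    using bounded_linear.continuous[OF bounded_linear_blinfun_mult_right c1]
    by (simp add: split_beta case_prod_beta')
  have "((\<lambda>(x, y). g x y) has_derivative (\<lambda>(tx, ty). (\<lambda>h. A * h) tx + blinfun_mult_right (gy x y) ty)) (at (x, y) within X \<times> Y)"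
    apply (rule has_derivative_partialsI[where fy="\<lambda>x y. blinfun_mult_right (gy x y)"])
    using gx apply (simp add: has_field_derivative_def)
    using gy apply (simp add: has_field_derivative_eq_has_derivative_blinfun)
    using c2 apply (simp add: continuous_within)
    using xy cvx by auto
  then show ?thesis by (simp add: split_beta' case_prod_beta)
qed




lemma clairaut:
  fixes g gx gt gxt gtx :: "real \<Rightarrow> real \<Rightarrow> real" and UU :: "(real \<times> real) set"
  assumes UU: "open UU" and p0: "(x0, t0) \<in> UU"
    and gx: "\<And>x t. (x,t) \<in> UU \<Longrightarrow> ((\<lambda>y. g y t) has_real_derivative gx x t) (at x)"
    and gt: "\<And>x t. (x,t) \<in> UU \<Longrightarrow> ((\<lambda>s. g x s) has_real_derivative gt x t) (at t)"
    and gxt: "\<And>x t. (x,t) \<in> UU \<Longrightarrow> ((\<lambda>s. gx x s) has_real_derivative gxt x t) (at t)"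
    and gtx: "\<And>x t. (x,t) \<in> UU \<Longrightarrow> ((\<lambda>y. gt y t) has_real_derivative gtx x t) (at x)"
    and c1: "continuous_on UU (\<lambda>(x,t). gxt x t)" and c2: "continuous_on UU (\<lambda>(x,t). gtx x t)"
  shows "gxt x0 t0 = gtx x0 t0"
proof (rule ccontr)
  assume ne: "gxt x0 t0 \<noteq> gtx x0 t0"
  define e where "e = \<bar>gxt x0 t0 - gtx x0 t0\<bar> / 2"
  have e: "e > 0" using ne by (simp add: e_def)
  have ic1: "isCont (\<lambda>(x,t). gxt x t) (x0,t0)" using c1 UU p0 continuous_on_eq_continuous_at by blast
  have ic2: "isCont (\<lambda>(x,t). gtx x t) (x0,t0)" using c2 UU p0 continuous_on_eq_continuous_at by blast
  obtain d1 where d1: "d1 > 0" "\<And>p. dist p (x0,t0) < d1 \<Longrightarrow> dist ((\<lambda>(x,t). gxt x t) p) (gxt x0 t0) < e"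
    using ic1[unfolded continuous_at_eps_delta] e by fastforce
  obtain d2 where d2: "d2 > 0" "\<And>p. dist p (x0,t0) < d2 \<Longrightarrow> dist ((\<lambda>(x,t). gtx x t) p) (gtx x0 t0) < e"
    using ic2[unfolded continuous_at_eps_delta] e by fastforce
  obtain d3 where d3: "d3 > 0" "ball (x0,t0) d3 \<subseteq> UU" using UU p0 open_contains_ball by blast
  define d where "d = min d1 (min d2 d3)"
  define h where "h = d / 3"
  have h: "h > 0" using d1 d2 d3 by (simp add: h_def d_def)
  have near: "dist (x,t) (x0,t0) < d" if "\<bar>x - x0\<bar> \<le> h" "\<bar>t - t0\<bar> \<le> h" for x t
  proof -
    have "dist (x,t) (x0,t0) = norm (x - x0, t - t0)" by (simp add: dist_norm)
    also have "\<dots> \<le> norm (x - x0) + norm (t - t0)" by (rule norm_Pair_le)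
    also have "\<dots> \<le> 2*h" using that by simp
    also have "\<dots> < d" using h by (simp add: h_def)
    finally show ?thesis .
  qed
  have inO: "(x,t) \<in> UU" if "\<bar>x - x0\<bar> \<le> h" "\<bar>t - t0\<bar> \<le> h" for x t
    using near[OF that] d3 by (auto simp: d_def dist_commute)
  have close1: "\<bar>gxt x t - gxt x0 t0\<bar> < e" if "\<bar>x - x0\<bar> \<le> h" "\<bar>t - t0\<bar> \<le> h" for x t
    using d1(2)[of "(x,t)"] near[OF that] by (auto simp: d_def dist_real_def)
  have close2: "\<bar>gtx x t - gtx x0 t0\<bar> < e" if "\<bar>x - x0\<bar> \<le> h" "\<bar>t - t0\<bar> \<le> h" for x t
    using d2(2)[of "(x,t)"] near[OF that] by (auto simp: d_def dist_real_def)
  define D where "D = g (x0+h) (t0+h) - g (x0+h) t0 - g x0 (t0+h) + g x0 t0"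
  obtain \<xi> where \<xi>: "x0 < \<xi>" "\<xi> < x0 + h"
    "(\<lambda>y. g y (t0+h) - g y t0) (x0+h) - (\<lambda>y. g y (t0+h) - g y t0) x0 = (x0 + h - x0) * (gx \<xi> (t0+h) - gx \<xi> t0)"
  proof -
    have "\<And>y. x0 \<le> y \<Longrightarrow> y \<le> x0 + h \<Longrightarrow> ((\<lambda>y. g y (t0+h) - g y t0) has_real_derivative (gx y (t0+h) - gx y t0)) (at y)"
      using h by (auto intro!: DERIV_diff gx inO)
    from MVT2[of x0 "x0+h", OF _ this] h show ?thesis using that by auto
  qed
  obtain \<eta> where \<eta>: "t0 < \<eta>" "\<eta> < t0 + h"
    "gx \<xi> (t0+h) - gx \<xi> t0 = (t0 + h - t0) * gxt \<xi> \<eta>"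
  proof -
    have "\<And>s. t0 \<le> s \<Longrightarrow> s \<le> t0 + h \<Longrightarrow> ((\<lambda>s. gx \<xi> s) has_real_derivative gxt \<xi> s) (at s)"
      using h \<xi> by (auto intro!: gxt inO)
    from MVT2[of t0 "t0+h", OF _ this] h show ?thesis using that by auto
  qed
  obtain \<eta>' where \<eta>': "t0 < \<eta>'" "\<eta>' < t0 + h"
    "(\<lambda>s. g (x0+h) s - g x0 s) (t0+h) - (\<lambda>s. g (x0+h) s - g x0 s) t0 = (t0 + h - t0) * (gt (x0+h) \<eta>' - gt x0 \<eta>')"
  proof -
    have "\<And>s. t0 \<le> s \<Longrightarrow> s \<le> t0 + h \<Longrightarrow> ((\<lambda>s. g (x0+h) s - g x0 s) has_real_derivative (gt (x0+h) s - gt x0 s)) (at s)"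
      using h by (auto intro!: DERIV_diff gt inO)
    from MVT2[of t0 "t0+h", OF _ this] h show ?thesis using that by auto
  qed
  obtain \<xi>' where \<xi>': "x0 < \<xi>'" "\<xi>' < x0 + h"
    "gt (x0+h) \<eta>' - gt x0 \<eta>' = (x0 + h - x0) * gtx \<xi>' \<eta>'"
  proof -
    have "\<And>y. x0 \<le> y \<Longrightarrow> y \<le> x0 + h \<Longrightarrow> ((\<lambda>y. gt y \<eta>') has_real_derivative gtx y \<eta>') (at y)"
      using h \<eta>' by (auto intro!: gtx inO)
    from MVT2[of x0 "x0+h", OF _ this] h show ?thesis using that by auto
  qed
  have "D = h * (h * gxt \<xi> \<eta>)" using \<xi> \<eta> by (simp add: D_def algebra_simps)
  moreover have "D = h * (h * gtx \<xi>' \<eta>')" using \<xi>' \<eta>' by (simp add: D_def algebra_simps)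
  ultimately have eq: "gxt \<xi> \<eta> = gtx \<xi>' \<eta>'" using h by simp
  have a1: "\<bar>gxt \<xi> \<eta> - gxt x0 t0\<bar> < e" using close1 \<xi> \<eta> by simp
  have a2: "\<bar>gtx \<xi>' \<eta>' - gtx x0 t0\<bar> < e" using close2 \<xi>' \<eta>' by simp
  have "\<bar>gxt x0 t0 - gtx x0 t0\<bar> \<le> \<bar>gxt \<xi> \<eta> - gxt x0 t0\<bar> + \<bar>gtx \<xi>' \<eta>' - gtx x0 t0\<bar>"
    using eq by linarith
  moreover have "\<bar>gxt x0 t0 - gtx x0 t0\<bar> = 2 * e" by (simp add: e_def)
  ultimately show False using a1 a2 by linarith
qed




definition SI :: "real \<Rightarrow> real \<Rightarrow> (real \<Rightarrow> real) \<Rightarrow> real" where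
  "SI a b h = (if a \<le> b then integral {a..b} h else - integral {b..a} h)"

lemma SI_split:
  assumes h: "continuous_on UNIV h" and "c \<le> a" "c \<le> b"
  shows "SI a b h = integral {c..b} h - integral {c..a} h"
proof (cases "a \<le> b")
  case True
  have "integral {c..a} h + integral {a..b} h = integral {c..b} h"
    by (rule Henstock_Kurzweil_Integration.integral_combine) (use True assms in \<open>auto intro: integrable_continuous_interval continuous_on_subset[OF h]\<close>)
  then show ?thesis using True by (simp add: SI_def)
next
  case False
  have "integral {c..b} h + integral {b..a} h = integral {c..a} h"
    by (rule Henstock_Kurzweil_Integration.integral_combine) (use False assms in \<open>auto intro: integrable_continuous_interval continuous_on_subset[OF h]\<close>)
  then show ?thesis using False by (simp add: SI_def)
qed

lemma SI_deriv:
  assumes h: "continuous_on UNIV h"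
  shows "((\<lambda>y. SI a y h) has_real_derivative h y) (at y)"
proof -
  define c where "c = min a y - 1"
  have d1: "((\<lambda>z. integral {c..z} h) has_real_derivative h y) (at y within {c..y+1})"
    by (rule integral_has_real_derivative) (auto simp: c_def intro: continuous_on_subset[OF h])
  have "at y within {c..y+1} = at y"
    by (rule at_within_interior) (auto simp: c_def)
  then have d2: "((\<lambda>z. integral {c..z} h - integral {c..a} h) has_real_derivative h y) (at y)"
    using d1 by (auto intro!: derivative_eq_intros)
  show ?thesis
    by (rule has_field_derivative_transform_within_open[OF d2, of "{c<..}"])
       (auto simp: c_def intro!: SI_split[OF h, symmetric])
qed

lemma SI_FTC:
  assumes G: "\<And>z. (G has_real_derivative g z) (at z)"
  shows "SI a b g = G b - G a"
proof (cases "a \<le> b")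
  case True
  have "(g has_integral (G b - G a)) {a..b}"
    by (rule fundamental_theorem_of_calculus[OF True])
       (use G in \<open>auto simp: has_real_derivative_iff_has_vector_derivative[symmetric] intro: has_field_derivative_at_within\<close>)
  then show ?thesis using True by (simp add: SI_def integral_unique)
next
  case False
  have "(g has_integral (G a - G b)) {b..a}"
    by (rule fundamental_theorem_of_calculus) (use G False in \<open>auto simp: has_real_derivative_iff_has_vector_derivative[symmetric] intro: has_field_derivative_at_within\<close>)
  then show ?thesis using False by (simp add: SI_def integral_unique)
qed

lemma SI_leibniz:
  fixes h hs :: "real \<Rightarrow> real \<Rightarrow> real"
  assumes hd: "\<And>s z. s \<in> U \<Longrightarrow> ((\<lambda>s. h s z) has_real_derivative hs s z) (at s within U)"
    and hc: "continuous_on (U \<times> UNIV) (\<lambda>(s,z). hs s z)"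
    and hi: "\<And>s. s \<in> U \<Longrightarrow> continuous_on UNIV (h s)"
    and s0: "s0 \<in> U" and cvx: "convex U"
  shows "((\<lambda>s. SI a b (h s)) has_real_derivative SI a b (hs s0)) (at s0 within U)"
proof (cases "a \<le> b")
  case True
  have "((\<lambda>s. integral (cbox a b) (h s)) has_real_derivative integral (cbox a b) (hs s0)) (at s0 within U)"
    by (rule leibniz_rule_field_derivative)
      (auto intro: hd s0 cvx continuous_on_subset[OF hc] integrable_continuous_interval continuous_on_subset[OF hi] simp: cbox_interval)
  then show ?thesis using True by (simp add: SI_def cbox_interval)
next
  case False
  have "((\<lambda>s. integral (cbox b a) (h s)) has_real_derivative integral (cbox b a) (hs s0)) (at s0 within U)"
    by (rule leibniz_rule_field_derivative)
      (auto intro: hd s0 cvx continuous_on_subset[OF hc] integrable_continuous_interval continuous_on_subset[OF hi] simp: cbox_interval)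
  then show ?thesis using False by (auto simp: SI_def cbox_interval intro!: derivative_eq_intros)
qed




definition C1S :: "real \<Rightarrow> (real \<Rightarrow> real \<Rightarrow> real) \<Rightarrow> (real \<Rightarrow> real \<Rightarrow> real) \<Rightarrow> (real \<Rightarrow> real \<Rightarrow> real) \<Rightarrow> bool" where
  "C1S T g gx gt \<longleftrightarrow> continuous_on (UNIV \<times> {0..<T}) (\<lambda>(x,t). g x t)
     \<and> continuous_on (UNIV \<times> {0..<T}) (\<lambda>(x,t). gx x t)
     \<and> continuous_on (UNIV \<times> {0..<T}) (\<lambda>(x,t). gt x t)
     \<and> (\<forall>x. \<forall>t\<in>{0..<T}. ((\<lambda>y. g y t) has_real_derivative gx x t) (at x)
          \<and> ((\<lambda>s. g x s) has_real_derivative gt x t) (at t within {0..<T}))"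

lemma Ck_cont: "Ck k g S \<Longrightarrow> continuous_on S (\<lambda>(x,t). g x t)"
  by (cases k) auto

lemma Ck_SucE:
  assumes "Ck (Suc k) g (UNIV \<times> {0..<T})"
  obtains gx gt where "C1S T g gx gt" "Ck k gx (UNIV \<times> {0..<T})" "Ck k gt (UNIV \<times> {0..<T})"
proof -
  from assms obtain gx gt where
    c: "continuous_on (UNIV \<times> {0..<T}) (\<lambda>(x,t). g x t)" and
    d: "\<forall>(x, t)\<in>UNIV \<times> {0..<T}.
          ((\<lambda>y. g y t) has_real_derivative gx x t) (at x within {y. (y, t) \<in> UNIV \<times> {0..<T}}) \<and>
          ((\<lambda>s. g x s) has_real_derivative gt x t) (at t within {s. (x, s) \<in> UNIV \<times> {0..<T}})"
    and k: "Ck k gx (UNIV \<times> {0..<T})" "Ck k gt (UNIV \<times> {0..<T})"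
    by auto
  have e1: "\<And>x. {s. (x, s) \<in> UNIV \<times> {0..<T}} = {0..<T}" by auto
  have e2: "\<And>t. t \<in> {0..<T} \<Longrightarrow> {y. (y, t) \<in> UNIV \<times> {0..<T}} = UNIV" by auto
  have "C1S T g gx gt"
    unfolding C1S_def using c Ck_cont[OF k(1)] Ck_cont[OF k(2)] d
    by (auto simp: e1 e2 Ball_def simp del: atLeastLessThan_iff)
  then show ?thesis using that k by blast
qed

lemma C1S_x: "C1S T g gx gt \<Longrightarrow> t \<in> {0..<T} \<Longrightarrow> ((\<lambda>y. g y t) has_real_derivative gx x t) (at x)"
  by (simp add: C1S_def)

lemma C1S_tw: "C1S T g gx gt \<Longrightarrow> t \<in> {0..<T} \<Longrightarrow> ((\<lambda>s. g x s) has_real_derivative gt x t) (at t within {0..<T})"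
  by (simp add: C1S_def)

lemma C1S_t: "C1S T g gx gt \<Longrightarrow> t \<in> {0<..<T} \<Longrightarrow> ((\<lambda>s. g x s) has_real_derivative gt x t) (at t)"
  using C1S_tw[of T g gx gt t x] at_within_interior[of t "{0..<T}"] by (simp add: interior_atLeastLessThan)

lemma C1S_dx: "C1S T g gx gt \<Longrightarrow> t \<in> {0..<T} \<Longrightarrow> dx g x t = gx x t"
  unfolding dx_def by (rule DERIV_imp_deriv) (rule C1S_x)

lemma C1S_dt: "C1S T g gx gt \<Longrightarrow> t \<in> {0<..<T} \<Longrightarrow> dt g x t = gt x t"
  unfolding dt_def by (rule DERIV_imp_deriv) (rule C1S_t)

lemma C1S_c: "C1S T g gx gt \<Longrightarrow> continuous_on (UNIV \<times> {0..<T}) (\<lambda>(x,t). g x t)"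
  "C1S T g gx gt \<Longrightarrow> continuous_on (UNIV \<times> {0..<T}) (\<lambda>(x,t). gx x t)"
  "C1S T g gx gt \<Longrightarrow> continuous_on (UNIV \<times> {0..<T}) (\<lambda>(x,t). gt x t)"
  by (simp_all add: C1S_def)

lemma C1S_joint:
  assumes "C1S T g gx gt" "t \<in> {0..<T}"
  shows "((\<lambda>z. g (fst z) (snd z)) has_derivative (\<lambda>h. gx x t * fst h + gt x t * snd h)) (at (x,t) within UNIV \<times> {0..<T})"
  by (rule joint_deriv) (use assms in \<open>auto intro: C1S_x C1S_tw C1S_c\<close>)

lemma C1S_curve:
  assumes "C1S T g gx gt" "s \<in> {0..<T}"
    and c: "(c has_real_derivative c') (at s within {0..<T})"
  shows "((\<lambda>r. g (c r) r) has_real_derivative (gx (c s) s * c' + gt (c s) s)) (at s within {0..<T})"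
proof -
  have "((\<lambda>r. g (c r) r) has_real_derivative (gx (c s) s * c' + gt (c s) s * 1)) (at s within {0..<T})"
    by (rule chain2[where X="UNIV \<times> {0..<T}"]) (use assms in \<open>auto intro: C1S_joint DERIV_ident\<close>)
  then show ?thesis by simp
qed




lemma cont_slice_x:
  fixes g :: "real \<Rightarrow> real \<Rightarrow> real" and T :: real
  assumes "continuous_on (UNIV \<times> {0..<T}) (\<lambda>(x,t). g x t)" "t \<in> {0..<T}"
  shows "continuous_on UNIV (\<lambda>z. g z t)"
proof -
  have "continuous_on UNIV (\<lambda>z. (z,t))" by (intro continuous_intros)
  moreover have "range (\<lambda>z. (z,t)) \<subseteq> UNIV \<times> {0..<T}" using assms(2) by auto
  ultimately show ?thesis using continuous_on_compose2[OF assms(1), of UNIV "\<lambda>z. (z,t)"] by simp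
qed

lemma cont_swap:
  fixes g :: "real \<Rightarrow> real \<Rightarrow> real" and T :: real
  assumes "continuous_on (UNIV \<times> {0..<T}) (\<lambda>(x,t). g x t)"
  shows "continuous_on ({0..<T} \<times> UNIV) (\<lambda>(s,z). g z s)"
proof -
  have "continuous_on ({0..<T} \<times> UNIV) (\<lambda>p::real\<times>real. (snd p, fst p))" by (intro continuous_intros)
  moreover have "(\<lambda>p::real\<times>real. (snd p, fst p)) ` ({0..<T} \<times> UNIV) \<subseteq> UNIV \<times> {0..<T}" by auto
  ultimately show ?thesis using continuous_on_compose2[OF assms, of "{0..<T} \<times> UNIV" "\<lambda>p. (snd p, fst p)"]
    by (simp add: case_prod_beta)
qed

lemma int_deriv_within:
  assumes k: "continuous_on {0..<T} k" and s: "s \<in> {0..<T}"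
  shows "((\<lambda>s. integral {0..s} k) has_real_derivative k s) (at s within {0..<T})"
proof -
  define b where "b = (s + T) / 2"
  have b: "s < b" "b < T" using s by (auto simp: b_def)
  have d: "((\<lambda>s. integral {0..s} k) has_real_derivative k s) (at s within {0..b})"
    by (rule integral_has_real_derivative) (use k b s in \<open>auto intro: continuous_on_subset\<close>)
  have "at s within {0..b} = at s within {0..<T}"
    by (rule at_within_nhd[of _ "{..<b}"]) (use b in auto)
  then show ?thesis using d by simp
qed

lemma const_on:
  assumes d: "\<And>r. r \<in> {0..<T} \<Longrightarrow> (\<phi> has_real_derivative \<phi>' r) (at r within {0..<T})"
    and z: "\<And>r. r \<in> {0<..<T} \<Longrightarrow> \<phi>' r = 0"
    and t: "t \<in> {0..<T}"
  shows "\<phi> t = \<phi> 0"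
proof (cases "t = 0")
  case False
  then have t0: "0 < t" using t by auto
  have c: "continuous_on {0..t} \<phi>"
    unfolding continuous_on_eq_continuous_within
  proof
    fix r assume r: "r \<in> {0..t}"
    then have "r \<in> {0..<T}" using t by auto
    then have "continuous (at r within {0..<T}) \<phi>" by (rule DERIV_continuous[OF d])
    then show "continuous (at r within {0..t}) \<phi>"
      by (rule continuous_within_subset) (use t in auto)
  qed
  have da: "(\<phi> has_real_derivative \<phi>' r) (at r)" if "0 < r" "r < t" for r
  proof -
    have "(\<phi> has_real_derivative \<phi>' r) (at r within {0..<T})" using d that t by auto
    moreover have "at r within {0..<T} = at r"
      by (rule at_within_interior) (use that t in \<open>auto simp: interior_atLeastLessThan\<close>)
    ultimately show ?thesis by simp
  qed
  obtain l z where lz: "0 < z" "z < t" "(\<phi> has_real_derivative l) (at z)" "\<phi> t - \<phi> 0 = (t - 0) * l"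
    using MVT[OF t0 c] da by (meson real_differentiable_def)
  have "l = \<phi>' z" using DERIV_unique[OF lz(3) da[OF lz(1,2)]] .
  moreover have "\<phi>' z = 0" using z lz t by auto
  ultimately show ?thesis using lz by simp
qed simp




locale setting =
  fixes f :: "real \<Rightarrow> real" and u m \<gamma> :: "real \<Rightarrow> real \<Rightarrow> real" and T :: real
    and ux ut uxx uxt utx utt uxxx uxxt uxtx uxtt utxx utxt mx mt :: "real \<Rightarrow> real \<Rightarrow> real"
  assumes f_C2: "C2_on {0<..} f"
    and f'_pos: "\<forall>s>0. deriv f s > 0"
    and HJ: "\<forall>x. \<forall>t\<in>{0<..<T}. - dt u x t + (dx u x t)\<^sup>2 / 2 = f (m x t)"
    and FP: "\<forall>x. \<forall>t\<in>{0<..<T}. dt m x t - dx (\<lambda>y s. m y s * dx u y s) x t = 0"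
    and m_pos: "\<forall>x. \<forall>t\<in>{0<..<T}. m x t > 0"
    and gamma_0: "\<forall>x. \<gamma> x 0 = x"
    and gamma_ode: "\<forall>x. \<forall>t\<in>{0..<T}.
          ((\<lambda>s. \<gamma> x s) has_real_derivative (- dx u (\<gamma> x t) t)) (at t within {0..<T})"
    and Cu: "C1S T u ux ut" and Cux: "C1S T ux uxx uxt" and Cut: "C1S T ut utx utt"
    and Cuxx: "C1S T uxx uxxx uxxt" and Cuxt: "C1S T uxt uxtx uxtt" and Cutx: "C1S T utx utxx utxt"
    and Cm: "C1S T m mx mt"
begin

lemma gam_d: "t \<in> {0..<T} \<Longrightarrow> ((\<lambda>s. \<gamma> x s) has_real_derivative - ux (\<gamma> x t) t) (at t within {0..<T})"
  using gamma_ode C1S_dx[OF Cu] by auto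

lemma gam_cont: "continuous_on {0..<T} (\<lambda>s. \<gamma> x s)"
  unfolding continuous_on_eq_continuous_within
proof
  fix s assume "s \<in> {0..<T}"
  then show "continuous (at s within {0..<T}) (\<lambda>s. \<gamma> x s)" by (rule DERIV_continuous[OF gam_d])
qed

lemma f_deriv: "s > 0 \<Longrightarrow> (f has_real_derivative deriv f s) (at s)"
  using f_C2 by (auto simp: C2_on_def DERIV_deriv_iff_real_differentiable)

lemma HJx:
  assumes t: "t \<in> {0<..<T}"
  shows "deriv f (m z t) * mx z t = - utx z t + ux z t * uxx z t"
proof -
  have t': "t \<in> {0..<T}" using t by auto
  have eq: "(\<lambda>y. f (m y t)) = (\<lambda>y. - ut y t + (ux y t)\<^sup>2 / 2)"
  proof
    fix y
    have "- dt u y t + (dx u y t)\<^sup>2 / 2 = f (m y t)" using HJ t by auto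
    then show "f (m y t) = - ut y t + (ux y t)\<^sup>2 / 2" using C1S_dt[OF Cu t] C1S_dx[OF Cu t'] by simp
  qed
  have d1: "((\<lambda>y. f (m y t)) has_real_derivative deriv f (m z t) * mx z t) (at z)"
    by (rule DERIV_chain2[OF f_deriv C1S_x[OF Cm t']]) (use m_pos t in auto)
  have d2: "((\<lambda>y. - ut y t + (ux y t)\<^sup>2 / 2) has_real_derivative - utx z t + ux z t * uxx z t) (at z)"
    using C1S_x[OF Cut t'] C1S_x[OF Cux t'] C1S_x[OF Cu t', of z]
    by (auto intro!: derivative_eq_intros)
  show ?thesis using DERIV_unique[OF d1[unfolded eq] d2] .
qed

lemma FPe:
  assumes t: "t \<in> {0<..<T}"
  shows "mt z t = mx z t * ux z t + m z t * uxx z t"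
proof -
  have t': "t \<in> {0..<T}" using t by auto
  have eq: "(\<lambda>y. m y t * dx u y t) = (\<lambda>y. m y t * ux y t)"
    using C1S_dx[OF Cu t'] by auto
  have "dx (\<lambda>y s. m y s * dx u y s) z t = deriv (\<lambda>y. m y t * ux y t) z"
    unfolding dx_def[of "\<lambda>y s. m y s * dx u y s"] eq by simp
  also have "\<dots> = mx z t * ux z t + m z t * uxx z t"
    by (rule DERIV_imp_deriv) (use C1S_x[OF Cm t'] C1S_x[OF Cux t'] in \<open>auto intro!: derivative_eq_intros\<close>)
  finally show ?thesis using FP t C1S_dt[OF Cm t] by auto
qed

lemma Oopen: "open (UNIV \<times> {0<..<T::real})"
  by (intro open_Times open_UNIV open_greaterThanLessThan)

lemma sym:
  assumes t: "t \<in> {0<..<T}"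
  shows "utxx z t = uxxt z t"
proof -
  have s1: "uxt y s = utx y s" if "s \<in> {0<..<T}" for y s
    by (rule clairaut[OF Oopen, of y s u ux ut])
      (use that in \<open>auto intro: C1S_x[OF Cu] C1S_t[OF Cu] C1S_t[OF Cux] C1S_x[OF Cut]
         continuous_on_subset[OF C1S_c(3)[OF Cux]] continuous_on_subset[OF C1S_c(2)[OF Cut]]\<close>)
  have s2: "uxxt z t = uxtx z t"
    by (rule clairaut[OF Oopen, of z t ux uxx uxt])
      (use t in \<open>auto intro: C1S_x[OF Cux] C1S_t[OF Cux] C1S_t[OF Cuxx] C1S_x[OF Cuxt]
         continuous_on_subset[OF C1S_c(3)[OF Cuxx]] continuous_on_subset[OF C1S_c(2)[OF Cuxt]]\<close>)
  have t': "t \<in> {0..<T}" using t by auto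
  have "(\<lambda>y. utx y t) = (\<lambda>y. uxt y t)" using s1 t by auto
  then have "((\<lambda>y. utx y t) has_real_derivative uxtx z t) (at z)"
    using C1S_x[OF Cuxt t'] by simp
  then have "utxx z t = uxtx z t" using DERIV_unique[OF C1S_x[OF Cutx t']] by blast
  then show ?thesis using s2 by simp
qed

end



lemma cont_slice_t:
  fixes g :: "real \<Rightarrow> real \<Rightarrow> real" and T :: real
  assumes "continuous_on (UNIV \<times> {0..<T}) (\<lambda>(x,t). g x t)"
  shows "continuous_on {0..<T} (\<lambda>s. g x s)"
proof -
  have "continuous_on {0..<T} (\<lambda>s. (x,s))" by (intro continuous_intros)
  moreover have "(\<lambda>s. (x,s)) ` {0..<T} \<subseteq> UNIV \<times> {0..<T}" by auto
  ultimately show ?thesis using continuous_on_compose2[OF assms, of "{0..<T}" "\<lambda>s. (x,s)"] by simp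
qed

context setting
begin

definition P where "P y t = SI 0 y (\<lambda>z. m z t) + integral {0..t} (\<lambda>s. m 0 s * ux 0 s)"
definition Pt where "Pt y t = SI 0 y (\<lambda>z. mt z t) + m 0 t * ux 0 t"

lemma P_x: "t \<in> {0..<T} \<Longrightarrow> ((\<lambda>y. P y t) has_real_derivative m y t) (at y)"
  unfolding P_def
  using SI_deriv[OF cont_slice_x[OF C1S_c(1)[OF Cm]], of t 0 y]
  by (auto intro!: derivative_eq_intros)

lemma P_t: "t \<in> {0..<T} \<Longrightarrow> ((\<lambda>s. P y s) has_real_derivative Pt y t) (at t within {0..<T})"
proof -
  assume t: "t \<in> {0..<T}"
  have d1: "((\<lambda>s. SI 0 y (\<lambda>z. m z s)) has_real_derivative SI 0 y (\<lambda>z. mt z t)) (at t within {0..<T})"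
    by (rule SI_leibniz[where h="\<lambda>s z. m z s" and hs="\<lambda>s z. mt z s"])
      (use t in \<open>auto intro: C1S_tw[OF Cm] cont_swap[OF C1S_c(3)[OF Cm]] cont_slice_x[OF C1S_c(1)[OF Cm]] convex_real_interval\<close>)
  have kc: "continuous_on {0..<T} (\<lambda>s. m 0 s * ux 0 s)"
    using cont_slice_t[OF C1S_c(1)[OF Cm], of 0] cont_slice_t[OF C1S_c(1)[OF Cux], of 0]
    by (intro continuous_on_mult)
  have d2: "((\<lambda>s. integral {0..s} (\<lambda>s. m 0 s * ux 0 s)) has_real_derivative m 0 t * ux 0 t) (at t within {0..<T})"
    by (rule int_deriv_within[OF kc t])
  show ?thesis unfolding P_def Pt_def using DERIV_add[OF d1 d2] .
qed

lemma Pt_int: "t \<in> {0<..<T} \<Longrightarrow> Pt y t = m y t * ux y t"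
proof -
  assume t: "t \<in> {0<..<T}"
  have t': "t \<in> {0..<T}" using t by auto
  have "SI 0 y (\<lambda>z. mt z t) = m y t * ux y t - m 0 t * ux 0 t"
  proof (rule SI_FTC)
    fix z
    show "((\<lambda>z. m z t * ux z t) has_real_derivative mt z t) (at z)"
      using C1S_x[OF Cm t'] C1S_x[OF Cux t'] FPe[OF t, of z]
      by (auto intro!: derivative_eq_intros simp: algebra_simps)
  qed
  then show ?thesis by (simp add: Pt_def)
qed

lemma P_curve:
  assumes s: "s \<in> {0..<T}"
  shows "((\<lambda>r. P (\<gamma> x r) r) has_real_derivative (Pt (\<gamma> x s) s - m (\<gamma> x s) s * ux (\<gamma> x s) s)) (at s within {0..<T})"
proof -
  have J: "((\<lambda>z. P (snd z) (fst z)) has_derivative (\<lambda>h. Pt (\<gamma> x s) s * fst h + m (\<gamma> x s) s * snd h))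
      (at (s, \<gamma> x s) within {0..<T} \<times> UNIV)"
    by (rule joint_deriv[where g="\<lambda>a b. P b a" and gy="\<lambda>a b. m b a", simplified])
      (use s in \<open>auto intro: P_t P_x cont_swap[OF C1S_c(1)[OF Cm]]\<close>)
  have "((\<lambda>r. P (\<gamma> x r) r) has_real_derivative (Pt (\<gamma> x s) s * 1 + m (\<gamma> x s) s * (- ux (\<gamma> x s) s))) (at s within {0..<T})"
    by (rule chain2[where F="\<lambda>a b. P b a" and a="\<lambda>r. r" and b="\<lambda>r. \<gamma> x r", OF J])
      (use s in \<open>auto intro: gam_d DERIV_ident\<close>)
  then show ?thesis by simp
qed

lemma P_const: "t \<in> {0..<T} \<Longrightarrow> P (\<gamma> x t) t = P x 0"
proof -
  assume t: "t \<in> {0..<T}"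
  have "(\<lambda>r. P (\<gamma> x r) r) t = (\<lambda>r. P (\<gamma> x r) r) 0"
    by (rule const_on[OF P_curve]) (use t in \<open>auto simp: Pt_int\<close>)
  then show ?thesis by (simp add: gamma_0)
qed

lemma P_mono: "t \<in> {0<..<T} \<Longrightarrow> a < b \<Longrightarrow> P a t < P b t"
proof -
  assume t: "t \<in> {0<..<T}" and ab: "a < b"
  show ?thesis
  proof (rule DERIV_pos_imp_increasing[where f="\<lambda>y. P y t", OF ab])
    fix z show "\<exists>y. ((\<lambda>y. P y t) has_real_derivative y) (at z) \<and> 0 < y"
      by (rule exI[of _ "m z t"]) (use t m_pos in \<open>auto intro: P_x\<close>)
  qed
qed

lemma P_mono_le: "t \<in> {0<..<T} \<Longrightarrow> a \<le> b \<Longrightarrow> P a t \<le> P b t"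
  using P_mono by (cases "a = b") (auto intro: less_imp_le)

lemma gam_isCont:
  assumes t: "t \<in> {0<..<T}"
  shows "isCont (\<lambda>y. \<gamma> y t) x"
proof -
  have t0: "0 \<in> {0..<T}" "t \<in> {0..<T}" using t by auto
  have P0c: "isCont (\<lambda>y. P y 0) x" by (rule DERIV_isCont[OF P_x[OF t0(1)]])
  show ?thesis unfolding isCont_def
  proof (rule tendstoI)
    fix e :: real assume e: "0 < e"
    have l: "P (\<gamma> x t - e) t < P x 0" using P_mono[OF t, of "\<gamma> x t - e" "\<gamma> x t"] P_const[OF t0(2)] e by simp
    have h: "P x 0 < P (\<gamma> x t + e) t" using P_mono[OF t, of "\<gamma> x t" "\<gamma> x t + e"] P_const[OF t0(2)] e by simp
    have ev1: "\<forall>\<^sub>F y in at x. P (\<gamma> x t - e) t < P y 0"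
      by (rule order_tendstoD(1)[OF P0c[unfolded isCont_def] l])
    have ev2: "\<forall>\<^sub>F y in at x. P y 0 < P (\<gamma> x t + e) t"
      by (rule order_tendstoD(2)[OF P0c[unfolded isCont_def] h])
    show "\<forall>\<^sub>F y in at x. dist (\<gamma> y t) (\<gamma> x t) < e"
      using eventually_conj[OF ev1 ev2]
    proof (rule eventually_mono)
      fix y assume a: "P (\<gamma> x t - e) t < P y 0 \<and> P y 0 < P (\<gamma> x t + e) t"
      have py: "P (\<gamma> y t) t = P y 0" by (rule P_const[OF t0(2)])
      have "\<gamma> x t - e < \<gamma> y t"
      proof (rule ccontr)
        assume "\<not> \<gamma> x t - e < \<gamma> y t"
        then have "P (\<gamma> y t) t \<le> P (\<gamma> x t - e) t" using P_mono_le[OF t] by simp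
        then show False using a py by simp
      qed
      moreover have "\<gamma> y t < \<gamma> x t + e"
      proof (rule ccontr)
        assume "\<not> \<gamma> y t < \<gamma> x t + e"
        then have "P (\<gamma> x t + e) t \<le> P (\<gamma> y t) t" using P_mono_le[OF t] by simp
        then show False using a py by simp
      qed
      ultimately show "dist (\<gamma> y t) (\<gamma> x t) < e" by (simp add: dist_real_def abs_less_iff)
    qed
  qed
qed

lemma gam_dx:
  assumes t: "t \<in> {0<..<T}"
  shows "((\<lambda>y. \<gamma> y t) has_real_derivative m x 0 / m (\<gamma> x t) t) (at x)"
proof -
  have t0: "0 \<in> {0..<T}" "t \<in> {0..<T}" using t by auto
  obtain \<phi> where \<phi>: "\<forall>z. P z t - P (\<gamma> x t) t = \<phi> z * (z - \<gamma> x t)" "isCont \<phi> (\<gamma> x t)" "\<phi> (\<gamma> x t) = m (\<gamma> x t) t"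
    using P_x[OF t0(2), of "\<gamma> x t"] unfolding CARAT_DERIV by blast
  obtain \<psi> where \<psi>: "\<forall>y. P y 0 - P x 0 = \<psi> y * (y - x)" "isCont \<psi> x" "\<psi> x = m x 0"
    using P_x[OF t0(1), of x] unfolding CARAT_DERIV by blast
  have key: "\<phi> (\<gamma> y t) * (\<gamma> y t - \<gamma> x t) = \<psi> y * (y - x)" for y
    using \<phi>(1)[rule_format, of "\<gamma> y t"] \<psi>(1)[rule_format, of y] P_const[OF t0(2), of y] P_const[OF t0(2), of x]
    by simp
  have mu: "m (\<gamma> x t) t > 0" using m_pos t by auto
  have cg: "isCont (\<lambda>y. \<phi> (\<gamma> y t)) x" by (rule isCont_o2[OF gam_isCont[OF t] \<phi>(2)])
  have ev: "\<forall>\<^sub>F y in at x. 0 < \<phi> (\<gamma> y t)"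
    by (rule order_tendstoD(1)[OF cg[unfolded isCont_def]]) (use \<phi>(3) mu in simp)
  define ch where "ch y = (if \<phi> (\<gamma> y t) \<noteq> 0 then \<psi> y / \<phi> (\<gamma> y t) else (\<gamma> y t - \<gamma> x t) / (y - x))" for y
  have eq: "\<gamma> y t - \<gamma> x t = ch y * (y - x)" for y
  proof (cases "\<phi> (\<gamma> y t) \<noteq> 0")
    case True
    then show ?thesis using key[of y] by (simp add: ch_def field_simps)
  next
    case False
    then have "y \<noteq> x" using \<phi>(3) mu by auto
    then show ?thesis using False by (simp add: ch_def)
  qed
  have lim: "((\<lambda>y. \<psi> y / \<phi> (\<gamma> y t)) \<longlongrightarrow> \<psi> x / \<phi> (\<gamma> x t)) (at x)"
    by (rule tendsto_divide) (use \<psi>(2) cg \<phi>(3) mu in \<open>auto simp: isCont_def\<close>)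
  have cx: "ch x = m x 0 / m (\<gamma> x t) t" using \<phi>(3) \<psi>(3) mu by (simp add: ch_def)
  have chx: "\<psi> x / \<phi> (\<gamma> x t) = ch x" using \<phi>(3) mu by (simp add: ch_def)
  have "isCont ch x" unfolding isCont_def
  proof (rule Lim_transform_eventually[OF lim[unfolded chx]])
    show "\<forall>\<^sub>F y in at x. \<psi> y / \<phi> (\<gamma> y t) = ch y"
      using ev by eventually_elim (simp add: ch_def)
  qed
  then show ?thesis unfolding CARAT_DERIV using eq cx by blast
qed

end



lemma within_to_at: "s \<in> {0<..<T} \<Longrightarrow> (f has_real_derivative D) (at s within {0..<T}) \<Longrightarrow> (f has_real_derivative D) (at s)"
  using at_within_interior[of s "{0..<T}"] by (simp add: interior_atLeastLessThan)

context setting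
begin

lemma mu_curve: "s \<in> {0..<T} \<Longrightarrow> ((\<lambda>r. m (\<gamma> x r) r) has_real_derivative (mx (\<gamma> x s) s * (- ux (\<gamma> x s) s) + mt (\<gamma> x s) s)) (at s within {0..<T})"
  by (rule C1S_curve[OF Cm _ gam_d])

lemma mu_int: "s \<in> {0<..<T} \<Longrightarrow> ((\<lambda>r. m (\<gamma> x r) r) has_real_derivative m (\<gamma> x s) s * uxx (\<gamma> x s) s) (at s)"
  using within_to_at[OF _ mu_curve, of s x] FPe[of s "\<gamma> x s"] by (auto simp: algebra_simps)

lemma curve_cont: "continuous_on {0..<T} (\<lambda>r. (\<gamma> x r, r))"
  by (intro continuous_on_Pair gam_cont continuous_on_id)

lemma m0_pos:
  assumes t: "t \<in> {0<..<T}"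
  shows "m x 0 > 0"
proof -
  define k where "k r = uxx (\<gamma> x r) r" for r
  have kc: "continuous_on {0..<T} k"
    unfolding k_def
    using continuous_on_compose2[OF C1S_c(1)[OF Cuxx] curve_cont, of x] by auto
  define K where "K s = integral {0..s} k" for s
  have Kd: "s \<in> {0..<T} \<Longrightarrow> (K has_real_derivative k s) (at s within {0..<T})" for s
    unfolding K_def by (rule int_deriv_within[OF kc])
  define w where "w r = m (\<gamma> x r) r * exp (- K r)" for r
  define w' where "w' r = (mx (\<gamma> x r) r * (- ux (\<gamma> x r) r) + mt (\<gamma> x r) r) * exp (- K r)
      + m (\<gamma> x r) r * (exp (- K r) * (- k r))" for r
  have wd: "r \<in> {0..<T} \<Longrightarrow> (w has_real_derivative w' r) (at r within {0..<T})" for r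
    unfolding w_def w'_def
    by (rule DERIV_cong[OF DERIV_mult[OF mu_curve DERIV_chain2[OF DERIV_exp DERIV_minus[OF Kd]]]])
      (simp_all add: algebra_simps)
  have wz: "r \<in> {0<..<T} \<Longrightarrow> w' r = 0" for r
    using FPe[of r "\<gamma> x r"] by (simp add: w'_def k_def algebra_simps)
  have "w t = w 0" by (rule const_on[OF wd wz]) (use t in auto)
  moreover have "w 0 = m x 0" by (simp add: w_def K_def gamma_0)
  moreover have "w t > 0" using m_pos t by (simp add: w_def)
  ultimately show ?thesis by simp
qed

end



context setting
begin

definition "gax y t = m y 0 / m (\<gamma> y t) t"
definition "F z t = - utx z t + ux z t * uxx z t"
definition "Fz z t = - utxx z t + (uxx z t)\<^sup>2 + ux z t * uxxx z t"
definition "G x s = m x 0 * uxx (\<gamma> x s) s / m (\<gamma> x s) s"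
definition "DG x t = m x 0 * (uxxx (\<gamma> x t) t * (- ux (\<gamma> x t) t) + uxxt (\<gamma> x t) t - (uxx (\<gamma> x t) t)\<^sup>2) / m (\<gamma> x t) t"

lemma dgam: "t \<in> {0<..<T} \<Longrightarrow> dx \<gamma> y t = gax y t"
  unfolding dx_def gax_def by (rule DERIV_imp_deriv[OF gam_dx])

lemma gax_pos: "t \<in> {0<..<T} \<Longrightarrow> gax y t > 0"
  unfolding gax_def using m0_pos m_pos by auto

lemma v_x:
  assumes t: "t \<in> {0<..<T}"
  shows "((\<lambda>y. vfun f m \<gamma> y t) has_real_derivative F (\<gamma> y t) t * gax y t) (at y)"
proof -
  have t': "t \<in> {0..<T}" using t by auto
  have a: "((\<lambda>y. m (\<gamma> y t) t) has_real_derivative mx (\<gamma> y t) t * gax y t) (at y)"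
    unfolding gax_def by (rule DERIV_chain2[OF C1S_x[OF Cm t'] gam_dx[OF t]])
  have b: "((\<lambda>y. f (m (\<gamma> y t) t)) has_real_derivative deriv f (m (\<gamma> y t) t) * (mx (\<gamma> y t) t * gax y t)) (at y)"
    by (rule DERIV_chain2[OF f_deriv a]) (use m_pos t in auto)
  show ?thesis unfolding vfun_def
    by (rule DERIV_cong[OF b]) (simp add: HJx[OF t] F_def)
qed

lemma dx_v: "t \<in> {0<..<T} \<Longrightarrow> dx (vfun f m \<gamma>) y t = F (\<gamma> y t) t * gax y t"
  unfolding dx_def by (rule DERIV_imp_deriv[OF v_x])

lemma ratio: "t \<in> {0<..<T} \<Longrightarrow> dx (vfun f m \<gamma>) y t / dx \<gamma> y t = F (\<gamma> y t) t"
  using dx_v dgam gax_pos[of t y] by simp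

lemma F_x: "t \<in> {0..<T} \<Longrightarrow> ((\<lambda>z. F z t) has_real_derivative Fz z t) (at z)"
  unfolding F_def Fz_def
  using C1S_x[OF Cutx] C1S_x[OF Cux] C1S_x[OF Cuxx]
  by (auto intro!: derivative_eq_intros simp: power2_eq_square)

lemma ratio_d:
  assumes t: "t \<in> {0<..<T}"
  shows "((\<lambda>y. dx (vfun f m \<gamma>) y t / dx \<gamma> y t) has_real_derivative Fz (\<gamma> x t) t * gax x t) (at x)"
proof -
  have t': "t \<in> {0..<T}" using t by auto
  have "(\<lambda>y. dx (vfun f m \<gamma>) y t / dx \<gamma> y t) = (\<lambda>y. F (\<gamma> y t) t)" using ratio[OF t] by auto
  moreover have "((\<lambda>y. F (\<gamma> y t) t) has_real_derivative Fz (\<gamma> x t) t * gax x t) (at x)"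
    unfolding gax_def by (rule DERIV_chain2[OF F_x[OF t'] gam_dx[OF t]])
  ultimately show ?thesis by simp
qed

lemma v_t:
  assumes s: "s \<in> {0<..<T}"
  shows "((\<lambda>r. vfun f m \<gamma> x r) has_real_derivative deriv f (m (\<gamma> x s) s) * (m (\<gamma> x s) s * uxx (\<gamma> x s) s)) (at s)"
  unfolding vfun_def by (rule DERIV_chain2[OF f_deriv mu_int[OF s]]) (use m_pos s in auto)

lemma dt_v: "s \<in> {0<..<T} \<Longrightarrow> dt (vfun f m \<gamma>) x s = deriv f (m (\<gamma> x s) s) * (m (\<gamma> x s) s * uxx (\<gamma> x s) s)"
  unfolding dt_def by (rule DERIV_imp_deriv[OF v_t])

lemma H_eq:
  assumes s: "s \<in> {0<..<T}"
  shows "(dx \<gamma> x s)\<^sup>2 / (m x 0 * deriv f (m x 0 / dx \<gamma> x s)) * dt (vfun f m \<gamma>) x s = G x s"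
proof -
  have m0: "m x 0 > 0" using m0_pos[OF s] .
  have mu: "m (\<gamma> x s) s > 0" using m_pos s by auto
  have q: "m x 0 / dx \<gamma> x s = m (\<gamma> x s) s" using m0 mu by (simp add: dgam[OF s] gax_def)
  have fp: "deriv f (m (\<gamma> x s) s) > 0" using f'_pos mu by auto
  show ?thesis unfolding q dt_v[OF s] dgam[OF s] gax_def G_def
    using m0 mu fp by (simp add: field_simps power2_eq_square)
qed

lemma uxx_curve: "s \<in> {0<..<T} \<Longrightarrow> ((\<lambda>r. uxx (\<gamma> x r) r) has_real_derivative (uxxx (\<gamma> x s) s * (- ux (\<gamma> x s) s) + uxxt (\<gamma> x s) s)) (at s)"
proof -
  assume s: "s \<in> {0<..<T}"
  then have s': "s \<in> {0..<T}" by auto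
  show ?thesis by (rule within_to_at[OF s C1S_curve[OF Cuxx s' gam_d[OF s']]])
qed

lemma G_d:
  assumes t: "t \<in> {0<..<T}"
  shows "((\<lambda>s. G x s) has_real_derivative DG x t) (at t)"
proof -
  have mu: "m (\<gamma> x t) t > 0" using m_pos t by auto
  have d: "((\<lambda>s. m x 0 * uxx (\<gamma> x s) s / m (\<gamma> x s) s) has_real_derivative
     ((0 * uxx (\<gamma> x t) t + (uxxx (\<gamma> x t) t * (- ux (\<gamma> x t) t) + uxxt (\<gamma> x t) t) * m x 0) * m (\<gamma> x t) t
       - m x 0 * uxx (\<gamma> x t) t * (m (\<gamma> x t) t * uxx (\<gamma> x t) t)) / (m (\<gamma> x t) t * m (\<gamma> x t) t)) (at t)"
    by (rule DERIV_divide[OF DERIV_mult[OF DERIV_const uxx_curve[OF t]] mu_int[OF t]]) (use mu in simp)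
  show ?thesis unfolding G_def
    by (rule DERIV_cong[OF d]) (use mu in \<open>simp add: DG_def field_simps power2_eq_square\<close>)
qed

lemma H_d:
  assumes t: "t \<in> {0<..<T}"
  shows "((\<lambda>s. (dx \<gamma> x s)\<^sup>2 / (m x 0 * deriv f (m x 0 / dx \<gamma> x s)) * dt (vfun f m \<gamma>) x s) has_real_derivative DG x t) (at t)"
  by (rule has_field_derivative_transform_within_open[OF G_d[OF t], of "{0<..<T}"]) (use t H_eq in auto)

lemma main_eq:
  assumes t: "t \<in> {0<..<T}"
  shows "- (Fz (\<gamma> x t) t * gax x t) - DG x t = 0"
proof -
  have mu: "m (\<gamma> x t) t > 0" using m_pos t by auto
  show ?thesis unfolding Fz_def DG_def gax_def using sym[OF t, of "\<gamma> x t"] mu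
    by (simp add: field_simps power2_eq_square)
qed

end



context setting
begin

lemma part1:
  assumes t: "t \<in> {0<..<T}"
  shows "(\<lambda>y. dx (vfun f m \<gamma>) y t / dx \<gamma> y t) differentiable (at x) \<and>
        (\<lambda>s. (dx \<gamma> x s)\<^sup>2 / (m x 0 * deriv f (m x 0 / dx \<gamma> x s)) * dt (vfun f m \<gamma>) x s)
           differentiable (at t) \<and>
        - dx (\<lambda>y s. dx (vfun f m \<gamma>) y s / dx \<gamma> y s) x t
        - dt (\<lambda>y s. (dx \<gamma> y s)\<^sup>2 / (m y 0 * deriv f (m y 0 / dx \<gamma> y s)) * dt (vfun f m \<gamma>) y s) x t
        = 0"
proof (intro conjI)
  show "(\<lambda>y. dx (vfun f m \<gamma>) y t / dx \<gamma> y t) differentiable (at x)"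
    by (rule differentiableI[OF ratio_d[OF t, unfolded has_field_derivative_def]])
  show "(\<lambda>s. (dx \<gamma> x s)\<^sup>2 / (m x 0 * deriv f (m x 0 / dx \<gamma> x s)) * dt (vfun f m \<gamma>) x s) differentiable (at t)"
    by (rule differentiableI[OF H_d[OF t, unfolded has_field_derivative_def]])
  have e1: "dx (\<lambda>y s. dx (vfun f m \<gamma>) y s / dx \<gamma> y s) x t = Fz (\<gamma> x t) t * gax x t"
    unfolding dx_def[of "\<lambda>y s. dx (vfun f m \<gamma>) y s / dx \<gamma> y s"]
    by (rule DERIV_imp_deriv) (rule ratio_d[OF t])
  have e2: "dt (\<lambda>y s. (dx \<gamma> y s)\<^sup>2 / (m y 0 * deriv f (m y 0 / dx \<gamma> y s)) * dt (vfun f m \<gamma>) y s) x t = DG x t"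
    unfolding dt_def[of "\<lambda>y s. (dx \<gamma> y s)\<^sup>2 / (m y 0 * deriv f (m y 0 / dx \<gamma> y s)) * dt (vfun f m \<gamma>) y s"]
    by (rule DERIV_imp_deriv) (rule H_d[OF t])
  show "- dx (\<lambda>y s. dx (vfun f m \<gamma>) y s / dx \<gamma> y s) x t
        - dt (\<lambda>y s. (dx \<gamma> y s)\<^sup>2 / (m y 0 * deriv f (m y 0 / dx \<gamma> y s)) * dt (vfun f m \<gamma>) y s) x t = 0"
    unfolding e1 e2 using main_eq[OF t] .
qed

lemma dx_term: "t \<in> {0<..<T} \<Longrightarrow> dx (\<lambda>y s. dx (vfun f m \<gamma>) y s / dx \<gamma> y s) x t = Fz (\<gamma> x t) t * gax x t"
  unfolding dx_def[of "\<lambda>y s. dx (vfun f m \<gamma>) y s / dx \<gamma> y s"]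
  by (rule DERIV_imp_deriv) (rule ratio_d)

lemma dt_G_transfer:
  assumes t: "t \<in> {0<..<T}" and eq: "\<And>s. s \<in> {0<..<T} \<Longrightarrow> K x s = G x s"
  shows "dt K x t = DG x t"
  unfolding dt_def
  by (rule DERIV_imp_deriv, rule has_field_derivative_transform_within_open[OF G_d[OF t], of "{0<..<T}"])
     (use t eq in auto)

lemma powr_part:
  assumes th: "\<theta> > 0" and fp: "\<forall>s>0. f s = s powr \<theta>" and t: "t \<in> {0<..<T}"
  shows "- dx (\<lambda>y s. dx (vfun f m \<gamma>) y s / dx \<gamma> y s) x t
          - dt (\<lambda>y s. dx \<gamma> y s / (\<theta> * vfun f m \<gamma> y s) * dt (vfun f m \<gamma>) y s) x t = 0
          \<and>
          - dt (dt (vfun f m \<gamma>)) x t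
          - \<theta> * vfun f m \<gamma> x t / (dx \<gamma> x t)\<^sup>2 * dx (dx (vfun f m \<gamma>)) x t
          + dx (vfun f m \<gamma>) x t * \<theta> * vfun f m \<gamma> x t / (dx \<gamma> x t) ^ 3 * dx (dx \<gamma>) x t
          + (\<theta> + 1) / \<theta> * (dt (vfun f m \<gamma>) x t)\<^sup>2 / vfun f m \<gamma> x t = 0"
proof -
  have fpd: "deriv f s = \<theta> * s powr (\<theta> - 1)" if "s > 0" for s
  proof (rule DERIV_imp_deriv)
    show "(f has_real_derivative \<theta> * s powr (\<theta> - 1)) (at s)"
      by (rule has_field_derivative_transform_within_open[OF has_real_derivative_powr[OF that], of "{0<..}"])
         (use that fp in auto)
  qed
  have pw: "a powr (\<theta> - 1) = a powr \<theta> / a" if "a > 0" for a :: real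
    using that by (simp add: powr_diff)
  have vp: "vfun f m \<gamma> y s = m (\<gamma> y s) s powr \<theta>" if "s \<in> {0<..<T}" for y s
    using fp m_pos that by (simp add: vfun_def)
  have dtp: "dt (vfun f m \<gamma>) x s = \<theta> * m (\<gamma> x s) s powr \<theta> * uxx (\<gamma> x s) s" if s: "s \<in> {0<..<T}" for s
  proof -
    have mu: "m (\<gamma> x s) s > 0" using m_pos s by auto
    show ?thesis unfolding dt_v[OF s] fpd[OF mu] pw[OF mu] using mu by simp
  qed
  have mu: "m (\<gamma> x t) t > 0" using m_pos t by auto
  have m0: "m x 0 > 0" using m0_pos[OF t] .
  have t': "t \<in> {0..<T}" and t0: "0 \<in> {0..<T}" using t by auto
  have A: "dt (\<lambda>y s. dx \<gamma> y s / (\<theta> * vfun f m \<gamma> y s) * dt (vfun f m \<gamma>) y s) x t = DG x t"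
  proof (rule dt_G_transfer[OF t])
    fix s assume s: "s \<in> {0<..<T}"
    have mus: "m (\<gamma> x s) s > 0" using m_pos s by auto
    have "m (\<gamma> x s) s powr \<theta> > 0" using mus by simp
    then show "dx \<gamma> x s / (\<theta> * vfun f m \<gamma> x s) * dt (vfun f m \<gamma>) x s = G x s"
      unfolding dgam[OF s] vp[OF s] dtp[OF s] gax_def G_def using th mus
      by (simp add: field_simps)
  qed
  show ?thesis
  proof
    show "- dx (\<lambda>y s. dx (vfun f m \<gamma>) y s / dx \<gamma> y s) x t
          - dt (\<lambda>y s. dx \<gamma> y s / (\<theta> * vfun f m \<gamma> y s) * dt (vfun f m \<gamma>) y s) x t = 0"
      unfolding A dx_term[OF t] using main_eq[OF t] .
  next
    define U where "U = uxx (\<gamma> x t) t"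
    define U' where "U' = uxxx (\<gamma> x t) t * (- ux (\<gamma> x t) t) + uxxt (\<gamma> x t) t"
    define Pw where "Pw = m (\<gamma> x t) t powr \<theta>"
    define M where "M = m (\<gamma> x t) t"
    have Pw: "Pw > 0" using mu by (simp add: Pw_def)
    have PwM: "M powr \<theta> = Pw" by (simp add: Pw_def M_def)
    have d1: "((\<lambda>s. \<theta> * m (\<gamma> x s) s powr \<theta> * uxx (\<gamma> x s) s) has_real_derivative
        \<theta> * (\<theta> * m (\<gamma> x t) t powr (\<theta> - 1) * (m (\<gamma> x t) t * uxx (\<gamma> x t) t)) * uxx (\<gamma> x t) t
        + U' * (\<theta> * m (\<gamma> x t) t powr \<theta>)) (at t)"
      unfolding U'_def
      by (rule DERIV_mult[OF DERIV_cmult[OF DERIV_chain2[OF has_real_derivative_powr[OF mu] mu_int[OF t]]] uxx_curve[OF t]])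
    have dtt: "dt (dt (vfun f m \<gamma>)) x t = \<theta> * (\<theta> * (Pw / M) * (M * U)) * U + U' * (\<theta> * Pw)"
      unfolding dt_def[of "dt (vfun f m \<gamma>)"]
    proof (rule DERIV_imp_deriv)
      show "((\<lambda>s. dt (vfun f m \<gamma>) x s) has_real_derivative \<theta> * (\<theta> * (Pw / M) * (M * U)) * U + U' * (\<theta> * Pw)) (at t)"
      proof -
        have d2: "((\<lambda>s. \<theta> * m (\<gamma> x s) s powr \<theta> * uxx (\<gamma> x s) s) has_real_derivative
            \<theta> * (\<theta> * (Pw / M) * (M * U)) * U + U' * (\<theta> * Pw)) (at t)"
          by (rule DERIV_cong[OF d1]) (simp add: pw[OF mu] Pw_def M_def U_def)
        show ?thesis
          by (rule has_field_derivative_transform_within_open[OF d2, of "{0<..<T}"])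
             (use t dtp in auto)
      qed
    qed
    define gxx where "gxx = (mx x 0 * M - m x 0 * (mx (\<gamma> x t) t * gax x t)) / (M * M)"
    have gd: "((\<lambda>y. gax y t) has_real_derivative gxx) (at x)"
      unfolding gax_def gxx_def M_def
      by (rule DERIV_divide[OF C1S_x[OF Cm t0] DERIV_chain2[OF C1S_x[OF Cm t'] gam_dx[OF t]]])
         (use mu in simp)
    have dxxg: "dx (dx \<gamma>) x t = gxx"
    proof -
      have "(\<lambda>y. dx \<gamma> y t) = (\<lambda>y. gax y t)" using dgam[OF t] by auto
      then show ?thesis unfolding dx_def[of "dx \<gamma>"] using DERIV_imp_deriv[OF gd] by simp
    qed
    have dxxv: "dx (dx (vfun f m \<gamma>)) x t = Fz (\<gamma> x t) t * gax x t * gax x t + gxx * F (\<gamma> x t) t"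
    proof -
      have "(\<lambda>y. dx (vfun f m \<gamma>) y t) = (\<lambda>y. F (\<gamma> y t) t * gax y t)" using dx_v[OF t] by auto
      moreover have "((\<lambda>y. F (\<gamma> y t) t * gax y t) has_real_derivative Fz (\<gamma> x t) t * gax x t * gax x t + gxx * F (\<gamma> x t) t) (at x)"
        by (rule DERIV_mult[OF DERIV_chain2[OF F_x[OF t'] gam_dx[OF t], folded gax_def] gd])
      ultimately show ?thesis unfolding dx_def[of "dx (vfun f m \<gamma>)"] using DERIV_imp_deriv by simp
    qed
    have gx: "gax x t = m x 0 / M" by (simp add: gax_def M_def)
    have sy: "utxx (\<gamma> x t) t = uxxt (\<gamma> x t) t" using sym[OF t] .
    show "- dt (dt (vfun f m \<gamma>)) x t
          - \<theta> * vfun f m \<gamma> x t / (dx \<gamma> x t)\<^sup>2 * dx (dx (vfun f m \<gamma>)) x t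
          + dx (vfun f m \<gamma>) x t * \<theta> * vfun f m \<gamma> x t / (dx \<gamma> x t) ^ 3 * dx (dx \<gamma>) x t
          + (\<theta> + 1) / \<theta> * (dt (vfun f m \<gamma>) x t)\<^sup>2 / vfun f m \<gamma> x t = 0"
      unfolding dtt dxxv dxxg dx_v[OF t] dgam[OF t] dtp[OF t] vp[OF t] gx
      using th Pw mu m0 sy
      by (simp add: Fz_def U_def U'_def Pw_def[symmetric] M_def[symmetric] PwM field_simps power2_eq_square power3_eq_cube)
  qed
qed

lemma ln_part:
  assumes fl: "\<forall>s>0. f s = ln s" and t: "t \<in> {0<..<T}"
  shows "- dx (\<lambda>y s. dx (vfun f m \<gamma>) y s / dx \<gamma> y s) x t
          - dt (\<lambda>y s. dx \<gamma> y s * dt (vfun f m \<gamma>) y s) x t = 0"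
proof -
  have fld: "deriv f s = inverse s" if "s > 0" for s
  proof (rule DERIV_imp_deriv)
    show "(f has_real_derivative inverse s) (at s)"
      by (rule has_field_derivative_transform_within_open[OF DERIV_ln[OF that], of "{0<..}"])
         (use that fl in auto)
  qed
  have A: "dt (\<lambda>y s. dx \<gamma> y s * dt (vfun f m \<gamma>) y s) x t = DG x t"
  proof (rule dt_G_transfer[OF t])
    fix s assume s: "s \<in> {0<..<T}"
    have mus: "m (\<gamma> x s) s > 0" using m_pos s by auto
    then show "dx \<gamma> x s * dt (vfun f m \<gamma>) x s = G x s"
      unfolding dgam[OF s] dt_v[OF s] fld[OF mus] gax_def G_def
      by (simp add: field_simps)
  qed
  show ?thesis unfolding A dx_term[OF t] using main_eq[OF t] .
qed

end


theorem lemma3p5: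
  fixes f :: "real \<Rightarrow> real" and u m \<gamma> :: "real \<Rightarrow> real \<Rightarrow> real" and T :: real
  assumes f_C2: "C2_on {0<..} f"
    and f'_pos: "\<forall>s>0. deriv f s > 0"
    and u_C3: "Ck 3 u (UNIV \<times> {0..<T})"
    and m_C2: "Ck 2 m (UNIV \<times> {0..<T})"
    and HJ: "\<forall>x. \<forall>t\<in>{0<..<T}. - dt u x t + (dx u x t)\<^sup>2 / 2 = f (m x t)"
    and FP: "\<forall>x. \<forall>t\<in>{0<..<T}. dt m x t - dx (\<lambda>y s. m y s * dx u y s) x t = 0"
    and m_pos: "\<forall>x. \<forall>t\<in>{0<..<T}. m x t > 0"
    and ux_lin: "\<exists>C. \<forall>x. \<forall>t\<in>{0<..<T}. \<bar>dx u x t\<bar> \<le> C * (1 + \<bar>x\<bar>)"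
    and gamma_0: "\<forall>x. \<gamma> x 0 = x"
    and gamma_ode: "\<forall>x. \<forall>t\<in>{0..<T}.
          ((\<lambda>s. \<gamma> x s) has_real_derivative (- dx u (\<gamma> x t) t)) (at t within {0..<T})"
  shows
    "(\<forall>x. \<forall>t\<in>{0<..<T}.
        (\<lambda>y. dx (vfun f m \<gamma>) y t / dx \<gamma> y t) differentiable (at x) \<and>
        (\<lambda>s. (dx \<gamma> x s)\<^sup>2 / (m x 0 * deriv f (m x 0 / dx \<gamma> x s)) * dt (vfun f m \<gamma>) x s)
           differentiable (at t) \<and>
        - dx (\<lambda>y s. dx (vfun f m \<gamma>) y s / dx \<gamma> y s) x t
        - dt (\<lambda>y s. (dx \<gamma> y s)\<^sup>2 / (m y 0 * deriv f (m y 0 / dx \<gamma> y s)) * dt (vfun f m \<gamma>) y s) x t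
        = 0)
   \<and> (\<forall>\<theta>>0. (\<forall>s>0. f s = s powr \<theta>) \<longrightarrow>
        (\<forall>x. \<forall>t\<in>{0<..<T}.
          - dx (\<lambda>y s. dx (vfun f m \<gamma>) y s / dx \<gamma> y s) x t
          - dt (\<lambda>y s. dx \<gamma> y s / (\<theta> * vfun f m \<gamma> y s) * dt (vfun f m \<gamma>) y s) x t = 0
          \<and>
          - dt (dt (vfun f m \<gamma>)) x t
          - \<theta> * vfun f m \<gamma> x t / (dx \<gamma> x t)\<^sup>2 * dx (dx (vfun f m \<gamma>)) x t
          + dx (vfun f m \<gamma>) x t * \<theta> * vfun f m \<gamma> x t / (dx \<gamma> x t) ^ 3 * dx (dx \<gamma>) x t
          + (\<theta> + 1) / \<theta> * (dt (vfun f m \<gamma>) x t)\<^sup>2 / vfun f m \<gamma> x t = 0))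
   \<and> ((\<forall>s>0. f s = ln s) \<longrightarrow>
        (\<forall>x. \<forall>t\<in>{0<..<T}.
          - dx (\<lambda>y s. dx (vfun f m \<gamma>) y s / dx \<gamma> y s) x t
          - dt (\<lambda>y s. dx \<gamma> y s * dt (vfun f m \<gamma>) y s) x t = 0))"
  proof -
  have e3: "(3::nat) = Suc 2" and e2: "(2::nat) = Suc 1" and e1: "(1::nat) = Suc 0" by simp_all
  obtain ux ut where Cu: "C1S T u ux ut" and Cux0: "Ck 2 ux (UNIV \<times> {0..<T})" and Cut0: "Ck 2 ut (UNIV \<times> {0..<T})"
    using Ck_SucE[of 2 u T] u_C3 unfolding e3 by blast
  obtain uxx uxt where Cux: "C1S T ux uxx uxt" and Cuxx0: "Ck 1 uxx (UNIV \<times> {0..<T})" and Cuxt0: "Ck 1 uxt (UNIV \<times> {0..<T})"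
    using Ck_SucE[of 1 ux T] Cux0 unfolding e2 by blast
  obtain utx utt where Cut: "C1S T ut utx utt" and Cutx0: "Ck 1 utx (UNIV \<times> {0..<T})"
    using Ck_SucE[of 1 ut T] Cut0 unfolding e2 by blast
  obtain uxxx uxxt where Cuxx: "C1S T uxx uxxx uxxt"
    using Ck_SucE[of 0 uxx T] Cuxx0 unfolding e1 by blast
  obtain uxtx uxtt where Cuxt: "C1S T uxt uxtx uxtt"
    using Ck_SucE[of 0 uxt T] Cuxt0 unfolding e1 by blast
  obtain utxx utxt where Cutx: "C1S T utx utxx utxt"
    using Ck_SucE[of 0 utx T] Cutx0 unfolding e1 by blast
  obtain mx mt where Cm: "C1S T m mx mt"
    using Ck_SucE[of 1 m T] m_C2 unfolding e2 by blast
  interpret S: setting f u m \<gamma> T ux ut uxx uxt utx utt uxxx uxxt uxtx uxtt utxx utxt mx mt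
    by (unfold_locales) (use f_C2 f'_pos HJ FP m_pos gamma_0 gamma_ode Cu Cux Cut Cuxx Cuxt Cutx Cm in auto)
  show ?thesis
    using S.part1 S.powr_part S.ln_part by blast
qed

end
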